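(* Let $I\subset(0,\infty)$ be an interval and let $f:I\to\mathbb{R}$ be differentiable on the interior $I^\circ$ of $I$. Let $m\in(0,1]$, $\alpha\in[0,1]$, $q>1$, $p$ with $\frac1p+\frac1q=1$, and $\theta>0$, and let $a,b$ be real numbers with $a<b$ and $a,\,b/m\in I^\circ$, such that $f'\in L[a,b]$. Suppose that $|f'|^q$ is harmonically $(\alpha,m)$-convex on $[a,b/m]$. Then $$\left|I_f(g;\theta,a,b)\right|\le \frac{a(b-a)}{2b}\left(\frac{1}{\theta p+1}\right)^{1/p}\left(\frac{|f'(a)|^q+m\alpha|f'(b/m)|^q}{\alpha+1}\right)^{1/q}\left[{}_2F_1\!\left(2p,\theta p+1;\theta p+2;1-\tfrac{a}{b}\right)^{1/p}+{}_2F_1\!\left(2p,1;\theta p+2;1-\tfrac{a}{b}\right)^{1/p}\right].$$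
   Context: A function $h:J\to\mathbb{R}$ on an interval $J\subset(0,\infty)$ is called harmonically $(\alpha,m)$-convex (with $\alpha\in[0,1]$, $m\in(0,1]$) if $h\left(\frac{mxy}{mty+(1-t)x}\right)\le t^{\alpha}h(x)+m(1-t^{\alpha})h(y)$ for all $x,y\in J$ and $t\in[0,1]$ (for which the left-hand side is defined, i.e. the argument lies in $J$). For $\varphi\in L[c,d]$ and $\theta>0$ the Riemann–Liouville integrals are $J^{\theta}_{c+}\varphi(x)=\frac{1}{\Gamma(\theta)}\int_c^x (x-t)^{\theta-1}\varphi(t)\,dt$ for $x>c$ and $J^{\theta}_{d-}\varphi(x)=\frac{1}{\Gamma(\theta)}\int_x^d (t-x)^{\theta-1}\varphi(t)\,dt$ for $x<d$, where $\Gamma$ is the Euler Gamma function. With $g(x)=1/x$, define $$I_f(g;\theta,a,b)=\frac{f(a)+f(b)}{2}-\frac{\Gamma(\theta+1)}{2}\left(\frac{ab}{b-a}\right)^{\theta}\left\{J^{\theta}_{1/a-}(f\circ g)(1/b)+J^{\theta}_{1/b+}(f\circ g)(1/a)\right\}.$$ The hypergeometric function is ${}_2F_1(a,b;c;z)=\frac{1}{\beta(b,c-b)}\int_0^1 t^{b-1}(1-t)^{c-b-1}(1-zt)^{-a}dt$ for $c>b>0$, $|z|<1$, where $\beta(x,y)=\int_0^1 t^{x-1}(1-t)^{y-1}dt$ is the Beta function. *)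

theory Defs
  imports "HOL-Analysis.Analysis"
begin

definition rpow :: "real \<Rightarrow> real \<Rightarrow> real" where
  "rpow t \<alpha> = (if t = 0 then (if \<alpha> = 0 then 1 else 0) else t powr \<alpha>)"

definition harm_alpha_m_convex :: "real \<Rightarrow> real \<Rightarrow> (real \<Rightarrow> real) \<Rightarrow> real set \<Rightarrow> bool" where
  "harm_alpha_m_convex \<alpha> m h J \<longleftrightarrow>
     (\<forall>x\<in>J. \<forall>y\<in>J. \<forall>t\<in>{0..1}.
        m * x * y / (m * t * y + (1 - t) * x) \<in> J \<longrightarrow>
        h (m * x * y / (m * t * y + (1 - t) * x))
          \<le> rpow t \<alpha> * h x + m * (1 - rpow t \<alpha>) * h y)"

definition RL_left :: "real \<Rightarrow> real \<Rightarrow> (real \<Rightarrow> real) \<Rightarrow> real \<Rightarrow> real" where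
  "RL_left c \<theta> \<phi> x = integral {c..x} (\<lambda>t. (x - t) powr (\<theta> - 1) * \<phi> t) / Gamma \<theta>"

definition RL_right :: "real \<Rightarrow> real \<Rightarrow> (real \<Rightarrow> real) \<Rightarrow> real \<Rightarrow> real" where
  "RL_right d \<theta> \<phi> x = integral {x..d} (\<lambda>t. (t - x) powr (\<theta> - 1) * \<phi> t) / Gamma \<theta>"

text \<open>I_f(g; theta, a, b) with g(x) = 1/x.\<close>
definition I_f :: "(real \<Rightarrow> real) \<Rightarrow> real \<Rightarrow> real \<Rightarrow> real \<Rightarrow> real" where
  "I_f f \<theta> a b = (f a + f b) / 2
     - Gamma (\<theta> + 1) / 2 * (a * b / (b - a)) powr \<theta>
       * (RL_right (1/a) \<theta> (f \<circ> (\<lambda>x. 1 / x)) (1/b) + RL_left (1/b) \<theta> (f \<circ> (\<lambda>x. 1 / x)) (1/a))"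

text \<open>Gauss hypergeometric function via Euler's integral representation (c > b > 0, |z| < 1).\<close>
definition hyp2F1 :: "real \<Rightarrow> real \<Rightarrow> real \<Rightarrow> real \<Rightarrow> real" where
  "hyp2F1 a b c z = integral {0..1} (\<lambda>t. t powr (b - 1) * (1 - t) powr (c - b - 1) * (1 - z * t) powr (- a))
                    / Beta b (c - b)"

end

theory Submission
  imports Defs
begin

lemma aff_refl:
  fixes lo hi I :: real and \<phi> :: "real \<Rightarrow> real"
  assumes "lo < hi" "(\<phi> has_integral I) {0..1}"
  shows "((\<lambda>t. \<phi> ((hi - t) / (hi - lo))) has_integral (hi - lo) * I) {lo..hi}"
proof -
  have m: "-1/(hi-lo) \<noteq> 0" using assms by simp
  have "((\<lambda>x. \<phi> ((-1/(hi-lo)) *\<^sub>R x + hi/(hi-lo))) has_integral (1 / (\<bar>-1/(hi-lo)\<bar> ^ DIM(real))) *\<^sub>R I)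
     ((\<lambda>x. (1 / (-1/(hi-lo))) *\<^sub>R x + -((1 / (-1/(hi-lo))) *\<^sub>R (hi/(hi-lo)))) ` cbox 0 1)"
    using has_integral_affinity[of \<phi> I 0 1 "-1/(hi-lo)" "hi/(hi-lo)"] m assms(2) by (simp add: cbox_interval)
  moreover have "(\<lambda>x. (1 / (-1/(hi-lo))) *\<^sub>R x + -((1 / (-1/(hi-lo))) *\<^sub>R (hi/(hi-lo)))) ` cbox 0 1 = {lo..hi}"
  proof -
    have e: "(\<lambda>x. (1 / (-1/(hi-lo))) *\<^sub>R x + -((1 / (-1/(hi-lo))) *\<^sub>R (hi/(hi-lo)))) = (\<lambda>x::real. hi - (hi-lo)*x)"
      using assms by (auto simp: field_simps)
    show ?thesis unfolding e
    proof
      show "(\<lambda>x. hi - (hi - lo) * x) ` cbox 0 1 \<subseteq> {lo..hi}"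
      proof
        fix y assume "y \<in> (\<lambda>x. hi - (hi - lo) * x) ` cbox 0 1"
        then obtain x :: real where x: "0 \<le> x" "x \<le> 1" and y: "y = hi - (hi - lo) * x" by auto
        have "(hi - lo) * x \<le> (hi - lo)" using assms x by (simp add: mult_left_le)
        moreover have "0 \<le> (hi - lo) * x" using assms x by simp
        ultimately show "y \<in> {lo..hi}" using y by simp
      qed
      show "{lo..hi} \<subseteq> (\<lambda>x. hi - (hi - lo) * x) ` cbox 0 1"
      proof
        fix t assume t: "t \<in> {lo..hi}"
        show "t \<in> (\<lambda>x. hi - (hi - lo) * x) ` cbox 0 1"
          by (rule image_eqI[where x="(hi-t)/(hi-lo)"]) (use assms t in \<open>auto simp: field_simps\<close>)
      qed
    qed
  qed
  moreover have "(\<lambda>x. \<phi> ((-1/(hi-lo)) *\<^sub>R x + hi/(hi-lo))) = (\<lambda>t. \<phi> ((hi - t) / (hi - lo)))"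
    by (auto simp: diff_divide_distrib)
  ultimately show ?thesis using assms by simp
qed

lemma young_int:
  fixes S :: "real set" and w h G :: "real \<Rightarrow> real" and p q Wp Gi :: real
  assumes pq: "p > 1" "q > 1" "1/p + 1/q = 1"
    and iw: "((\<lambda>t. w t powr p) has_integral Wp) S" and iG: "(G has_integral Gi) S"
    and pos: "Wp > 0" "Gi > 0"
    and iwh: "(\<lambda>t. w t * h t) integrable_on S"
    and pt: "\<forall>t\<in>S. 0 \<le> w t \<and> 0 \<le> h t \<and> h t powr q \<le> G t"
  shows "integral S (\<lambda>t. w t * h t) \<le> Wp powr (1/p) * Gi powr (1/q)"
proof -
  define A where "A = Wp powr (1/p)"
  define B where "B = Gi powr (1/q)"
  have A: "A > 0" "A powr p = Wp" using pos pq by (auto simp: A_def powr_powr)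
  have B: "B > 0" "B powr q = Gi" using pos pq by (auto simp: B_def powr_powr)
  define R where "R = (\<lambda>t. A * B * (w t powr p / (Wp * p) + G t / (Gi * q)))"
  have iR: "(R has_integral A * B * (Wp / (Wp * p) + Gi / (Gi * q))) S"
    unfolding R_def
    by (intro has_integral_mult_right has_integral_add has_integral_divide iw iG)
  have "A * B * (Wp / (Wp * p) + Gi / (Gi * q)) = A * B"
    using pos pq by simp
  note iR = iR[unfolded this]
  have le: "w t * h t \<le> R t" if t: "t \<in> S" for t
  proof -
    have w0: "0 \<le> w t" and h0: "0 \<le> h t" and hG: "h t powr q \<le> G t" using pt t by auto
    have "(w t / A) * (h t / B) \<le> (w t / A) powr p / p + (h t / B) powr q / q"
      using Youngs_inequality[OF pq, of "w t / A" "h t / B"] w0 h0 A B by simp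
    also have "(w t / A) powr p = w t powr p / Wp" using A w0 by (simp add: powr_divide)
    also have "(h t / B) powr q = h t powr q / Gi" using B h0 by (simp add: powr_divide)
    also have "h t powr q / Gi / q \<le> G t / (Gi * q)"
      using hG pos pq by (simp add: divide_right_mono field_simps)
    finally have "(w t / A) * (h t / B) \<le> w t powr p / (Wp * p) + G t / (Gi * q)" by (simp add: field_simps)
    then have "A * B * ((w t / A) * (h t / B)) \<le> A * B * (w t powr p / (Wp * p) + G t / (Gi * q))"
      using A B by (intro mult_left_mono) auto
    then show ?thesis using A B by (simp add: R_def field_simps)
  qed
  have "integral S (\<lambda>t. w t * h t) \<le> integral S R"
    by (rule integral_le[OF iwh]) (use iR le in auto)
  also have "\<dots> = A * B" using iR by (simp add: integral_unique)
  finally show ?thesis by (simp add: A_def B_def)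
qed

lemma absint_cont_mult:
  fixes u g :: "real \<Rightarrow> real"
  assumes "continuous_on {lo..hi} u" "g absolutely_integrable_on {lo..hi}"
  shows "(\<lambda>t. u t * g t) absolutely_integrable_on {lo..hi}"
proof (rule absolutely_integrable_bounded_measurable_product_real)
  show "u \<in> borel_measurable (lebesgue_on {lo..hi})"
    using assms(1) by (intro continuous_imp_measurable_on_sets_lebesgue) auto
  show "bounded (u ` {lo..hi})"
    using assms(1) by (intro compact_imp_bounded compact_continuous_image) auto
qed (use assms in auto)

lemma ibp_left:
  fixes P P' :: "real \<Rightarrow> real"
  assumes lh: "lo < hi" and th: "\<theta> > 0" and cP: "continuous_on {lo..hi} P"
    and dP: "\<And>t. t \<in> {lo<..<hi} \<Longrightarrow> (P has_real_derivative P' t) (at t)"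
    and iP: "P' absolutely_integrable_on {lo..hi}"
  shows "((\<lambda>t. \<theta> * (t - lo) powr (\<theta> - 1) * P t) has_integral
           ((hi - lo) powr \<theta> * P hi - integral {lo..hi} (\<lambda>t. (t - lo) powr \<theta> * P' t))) {lo..hi}"
proof -
  have c1: "continuous_on {lo..hi} (\<lambda>t. (t - lo) powr \<theta>)"
    using th by (intro continuous_on_powr') (auto intro!: continuous_intros)
  have ftc: "((\<lambda>t. \<theta> * (t - lo) powr (\<theta> - 1) * P t + (t - lo) powr \<theta> * P' t) has_integral
       ((hi - lo) powr \<theta> * P hi - (lo - lo) powr \<theta> * P lo)) {lo..hi}"
  proof (rule fundamental_theorem_of_calculus_interior[where f="\<lambda>t. (t - lo) powr \<theta> * P t"])
    show "lo \<le> hi" using lh by simp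
    show "continuous_on {lo..hi} (\<lambda>t. (t - lo) powr \<theta> * P t)"
      by (intro continuous_on_mult c1 cP)
    fix t assume t: "t \<in> {lo<..<hi}"
    have "((\<lambda>t. (t - lo) powr \<theta> * P t) has_real_derivative
            (\<theta> * (t - lo) powr (\<theta> - 1) * 1) * P t + (t - lo) powr \<theta> * P' t) (at t)"
      using t dP[OF t] by (auto intro!: derivative_eq_intros)
    then show "((\<lambda>t. (t - lo) powr \<theta> * P t) has_vector_derivative
            \<theta> * (t - lo) powr (\<theta> - 1) * P t + (t - lo) powr \<theta> * P' t) (at t)"
      by (simp add: has_real_derivative_iff_has_vector_derivative)
  qed
  have i2: "(\<lambda>t. (t - lo) powr \<theta> * P' t) integrable_on {lo..hi}"
    using absint_cont_mult[OF c1 iP] by (simp add: absolutely_integrable_on_def)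
  have "((\<lambda>t. (\<theta> * (t - lo) powr (\<theta> - 1) * P t + (t - lo) powr \<theta> * P' t) - (t - lo) powr \<theta> * P' t) has_integral
       ((hi - lo) powr \<theta> * P hi - (lo - lo) powr \<theta> * P lo) - integral {lo..hi} (\<lambda>t. (t - lo) powr \<theta> * P' t)) {lo..hi}"
    by (intro has_integral_diff ftc integrable_integral i2)
  then show ?thesis by simp
qed

lemma ibp_right:
  fixes P P' :: "real \<Rightarrow> real"
  assumes lh: "lo < hi" and th: "\<theta> > 0" and cP: "continuous_on {lo..hi} P"
    and dP: "\<And>t. t \<in> {lo<..<hi} \<Longrightarrow> (P has_real_derivative P' t) (at t)"
    and iP: "P' absolutely_integrable_on {lo..hi}"
  shows "((\<lambda>t. \<theta> * (hi - t) powr (\<theta> - 1) * P t) has_integral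
           ((hi - lo) powr \<theta> * P lo + integral {lo..hi} (\<lambda>t. (hi - t) powr \<theta> * P' t))) {lo..hi}"
proof -
  have c1: "continuous_on {lo..hi} (\<lambda>t. (hi - t) powr \<theta>)"
    using th by (intro continuous_on_powr') (auto intro!: continuous_intros)
  have ftc: "((\<lambda>t. (- (\<theta> * (hi - t) powr (\<theta> - 1) * P t)) + (hi - t) powr \<theta> * P' t) has_integral
       ((hi - hi) powr \<theta> * P hi - (hi - lo) powr \<theta> * P lo)) {lo..hi}"
  proof (rule fundamental_theorem_of_calculus_interior[where f="\<lambda>t. (hi - t) powr \<theta> * P t"])
    show "lo \<le> hi" using lh by simp
    show "continuous_on {lo..hi} (\<lambda>t. (hi - t) powr \<theta> * P t)"
      by (intro continuous_on_mult c1 cP)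
    fix t assume t: "t \<in> {lo<..<hi}"
    have "((\<lambda>t. (hi - t) powr \<theta> * P t) has_real_derivative
            (\<theta> * (hi - t) powr (\<theta> - 1) * (0 - 1)) * P t + (hi - t) powr \<theta> * P' t) (at t)"
      using t dP[OF t] by (auto intro!: derivative_eq_intros)
    then show "((\<lambda>t. (hi - t) powr \<theta> * P t) has_vector_derivative
            (- (\<theta> * (hi - t) powr (\<theta> - 1) * P t)) + (hi - t) powr \<theta> * P' t) (at t)"
      by (simp add: has_real_derivative_iff_has_vector_derivative)
  qed
  have i2: "(\<lambda>t. (hi - t) powr \<theta> * P' t) integrable_on {lo..hi}"
    using absint_cont_mult[OF c1 iP] by (simp add: absolutely_integrable_on_def)
  have "((\<lambda>t. (hi - t) powr \<theta> * P' t - ((- (\<theta> * (hi - t) powr (\<theta> - 1) * P t)) + (hi - t) powr \<theta> * P' t)) has_integral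
       integral {lo..hi} (\<lambda>t. (hi - t) powr \<theta> * P' t) - ((hi - hi) powr \<theta> * P hi - (hi - lo) powr \<theta> * P lo)) {lo..hi}"
    by (intro has_integral_diff ftc integrable_integral i2)
  then show ?thesis by (simp add: algebra_simps)
qed

lemma Beta_x1: "x > (0::real) \<Longrightarrow> Beta (x + 1) 1 = 1 / (x + 1)"
proof -
  assume x: "x > 0"
  have "Gamma (x + 1 + 1) = (x + 1) * Gamma (x + 1)"
    using x nonpos_Ints_nonpos[of "x+1"] by (intro Gamma_plus1) auto
  moreover have "Gamma (x + 1) > 0" using x by simp
  ultimately show ?thesis by (simp add: Beta_def add.assoc)
qed

lemma rpow_int: "\<alpha> \<ge> 0 \<Longrightarrow> ((\<lambda>u. rpow (1 - u) \<alpha>) has_integral 1 / (\<alpha> + 1)) {0..1::real}"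
proof -
  assume a: "\<alpha> \<ge> 0"
  have "((\<lambda>x. x powr \<alpha>) has_integral (1 powr (\<alpha>+1) / (\<alpha>+1))) {0..1::real}"
    using a by (intro has_integral_powr_from_0) auto
  then have "((\<lambda>x. x powr \<alpha>) has_integral 1 / (\<alpha>+1)) {0..1::real}" by simp
  from has_integral_spike_finite[OF _ _ this, of "{0}" "\<lambda>x. rpow x \<alpha>"]
  have "((\<lambda>x. rpow x \<alpha>) has_integral 1 / (\<alpha>+1)) {0..1::real}"
    by (auto simp: rpow_def)
  from aff_refl[OF _ this, of 0 1] show ?thesis by simp
qed

lemma powr_int01: "r > 0 \<Longrightarrow> ((\<lambda>u. u powr r) has_integral 1 / (r + 1)) {0..1::real}"
  using has_integral_powr_from_0[of r 1] by simp

lemma powr_int01': "r > 0 \<Longrightarrow> ((\<lambda>u. (1 - u) powr r) has_integral 1 / (r + 1)) {0..1::real}"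
  using aff_refl[OF _ powr_int01, of 0 1 r] by simp

lemma hyp_int1:
  assumes z: "0 \<le> z" "z < 1" and r: "r > 0" and s: "s > 0"
  shows "((\<lambda>u. u powr r * (1 - z*u) powr (-s)) has_integral hyp2F1 s (r+1) (r+2) z / (r+1)) {0..1}"
    and "hyp2F1 s (r+1) (r+2) z > 0"
proof -
  have pos: "1 - z*u > 0" if "u \<in> {0..1}" for u
  proof -
    have "z*u \<le> z" using that z by (simp add: mult_left_le)
    then show ?thesis using z by simp
  qed
  have c2: "continuous_on {0..1} (\<lambda>u. (1 - z*u) powr (-s))"
  proof (rule continuous_on_powr')
    show "\<forall>x\<in>{0..1}. 0 \<le> 1 - z * x \<and> (1 - z * x = 0 \<longrightarrow> 0 < - s)"
      using pos by (metis less_imp_le less_irrefl)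
  qed (auto intro!: continuous_intros)
  have cont: "continuous_on {0..1} (\<lambda>u. u powr r * (1 - z*u) powr (-s))"
    using r by (intro continuous_on_mult continuous_on_powr' c2) (auto intro!: continuous_intros)
  then have int: "(\<lambda>u. u powr r * (1 - z*u) powr (-s)) integrable_on {0..1}"
    by (rule integrable_continuous_interval)
  define V where "V = integral {0..1} (\<lambda>u. u powr r * (1 - z*u) powr (-s))"
  have hV: "((\<lambda>u. u powr r * (1 - z*u) powr (-s)) has_integral V) {0..1}"
    using int unfolding V_def by (rule integrable_integral)
  have "((\<lambda>t. t powr (r + 1 - 1) * (1 - t) powr (r + 2 - (r + 1) - 1) * (1 - z * t) powr - s) has_integral V) {0..1}"
    by (rule has_integral_spike_finite[OF _ _ hV, of "{1}"]) auto
  then have "hyp2F1 s (r+1) (r+2) z = V / Beta (r+1) (r+2-(r+1))"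
    unfolding hyp2F1_def by (simp add: integral_unique)
  also have "\<dots> = V * (r + 1)" using Beta_x1[OF r] by simp
  finally have eq: "hyp2F1 s (r+1) (r+2) z = V * (r+1)" .
  then show "((\<lambda>u. u powr r * (1 - z*u) powr (-s)) has_integral hyp2F1 s (r+1) (r+2) z / (r+1)) {0..1}"
    using hV r by simp
  have "1 / (r+1) \<le> V"
  proof (rule has_integral_le[OF powr_int01[OF r] hV])
    fix u :: real assume u: "u \<in> {0..1}"
    have "1 \<le> (1 - z*u) powr (-s)"
    proof -
      have "(1 - z*u) powr s \<le> 1" using pos[OF u] u z s
        by (intro powr_le1) (auto simp: mult_nonneg_nonneg)
      then show ?thesis using pos[OF u] by (simp add: powr_minus divide_simps)
    qed
    then show "u powr r \<le> u powr r * (1 - z*u) powr (-s)"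
      using u by (simp add: mult_le_cancel_left1)
  qed
  then have "V > 0" using r by (smt (verit) divide_pos_pos)
  then show "hyp2F1 s (r+1) (r+2) z > 0" using eq r by simp
qed

lemma hyp_int2:
  assumes z: "0 \<le> z" "z < 1" and r: "r > 0" and s: "s > 0"
  shows "((\<lambda>u. (1 - u) powr r * (1 - z*u) powr (-s)) has_integral hyp2F1 s 1 (r+2) z / (r+1)) {0..1}"
    and "hyp2F1 s 1 (r+2) z > 0"
proof -
  have pos: "1 - z*u > 0" if "u \<in> {0..1}" for u
  proof -
    have "z*u \<le> z" using that z by (simp add: mult_left_le)
    then show ?thesis using z by simp
  qed
  have c2: "continuous_on {0..1} (\<lambda>u. (1 - z*u) powr (-s))"
  proof (rule continuous_on_powr')
    show "\<forall>x\<in>{0..1}. 0 \<le> 1 - z * x \<and> (1 - z * x = 0 \<longrightarrow> 0 < - s)"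
      using pos by (metis less_imp_le less_irrefl)
  qed (auto intro!: continuous_intros)
  have cont: "continuous_on {0..1} (\<lambda>u. (1 - u) powr r * (1 - z*u) powr (-s))"
    using r by (intro continuous_on_mult continuous_on_powr' c2) (auto intro!: continuous_intros)
  then have int: "(\<lambda>u. (1 - u) powr r * (1 - z*u) powr (-s)) integrable_on {0..1}"
    by (rule integrable_continuous_interval)
  define V where "V = integral {0..1} (\<lambda>u. (1 - u) powr r * (1 - z*u) powr (-s))"
  have hV: "((\<lambda>u. (1 - u) powr r * (1 - z*u) powr (-s)) has_integral V) {0..1}"
    using int unfolding V_def by (rule integrable_integral)
  have "((\<lambda>t. t powr (1 - 1) * (1 - t) powr (r + 2 - 1 - 1) * (1 - z * t) powr - s) has_integral V) {0..1}"
    by (rule has_integral_spike_finite[OF _ _ hV, of "{0}"]) auto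
  then have "hyp2F1 s 1 (r+2) z = V / Beta 1 (r+2-1)"
    unfolding hyp2F1_def by (simp add: integral_unique)
  also have "Beta 1 (r+2-1) = Beta (r+1) 1" by (simp add: Beta_commute add.commute)
  also have "V / \<dots> = V * (r + 1)" using Beta_x1[OF r] by simp
  finally have eq: "hyp2F1 s 1 (r+2) z = V * (r+1)" .
  then show "((\<lambda>u. (1 - u) powr r * (1 - z*u) powr (-s)) has_integral hyp2F1 s 1 (r+2) z / (r+1)) {0..1}"
    using hV r by simp
  have "1 / (r+1) \<le> V"
  proof (rule has_integral_le[OF powr_int01'[OF r] hV])
    fix u :: real assume u: "u \<in> {0..1}"
    have "1 \<le> (1 - z*u) powr (-s)"
    proof -
      have "(1 - z*u) powr s \<le> 1" using pos[OF u] u z s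
        by (intro powr_le1) (auto simp: mult_nonneg_nonneg)
      then show ?thesis using pos[OF u] by (simp add: powr_minus divide_simps)
    qed
    then show "(1 - u) powr r \<le> (1 - u) powr r * (1 - z*u) powr (-s)"
      using u by (simp add: mult_le_cancel_left1)
  qed
  then have "V > 0" using r by (smt (verit) divide_pos_pos)
  then show "hyp2F1 s 1 (r+2) z > 0" using eq r by simp
qed

lemma final_alg:
  fixes c a p \<theta> H :: real
  assumes c: "c > 0" and a: "a > 0" and p: "p > 0" and H: "H \<ge> 0" and th: "\<theta>*p+1>0"
  shows "(c * (c powr (\<theta>*p) * a powr (2*p) * (H / (\<theta>*p+1)))) powr (1/p)
        = c powr (1/p) * c powr \<theta> * a^2 * (1 / (\<theta>*p+1)) powr (1/p) * H powr (1/p)"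
proof -
  have e1: "(c powr (\<theta>*p)) powr (1/p) = c powr \<theta>" using p by (simp add: powr_powr)
  have e2: "(a powr (2*p)) powr (1/p) = a^2"
  proof -
    have "(a powr (2*p)) powr (1/p) = a powr 2" using p by (simp add: powr_powr)
    also have "\<dots> = a^2" using a powr_realpow[of a 2] by simp
    finally show ?thesis .
  qed
  have e3: "(H / (\<theta>*p+1)) powr (1/p) = (1 / (\<theta>*p+1)) powr (1/p) * H powr (1/p)"
  proof -
    have "H / (\<theta>*p+1) = (1 / (\<theta>*p+1)) * H" by simp
    then show ?thesis using H th by (simp only: powr_mult less_imp_le divide_nonneg_pos zero_le_one)
  qed
  have "(c * (c powr (\<theta>*p) * a powr (2*p) * (H / (\<theta>*p+1)))) powr (1/p)
     = c powr (1/p) * ((c powr (\<theta>*p)) powr (1/p) * (a powr (2*p)) powr (1/p) * (H / (\<theta>*p+1)) powr (1/p))"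
  proof -
    have gen: "\<And>x y z w e::real. 0\<le>x \<Longrightarrow> 0\<le>y \<Longrightarrow> 0\<le>z \<Longrightarrow> 0\<le>w \<Longrightarrow>
        (x*(y*z*w)) powr e = x powr e * (y powr e * z powr e * w powr e)"
      by (simp add: powr_mult)
    show ?thesis by (rule gen) (use c a H th in auto)
  qed
  also have "\<dots> = c powr (1/p) * c powr \<theta> * a^2 * (1 / (\<theta>*p+1)) powr (1/p) * H powr (1/p)"
    unfolding e1 e2 e3 by (simp add: mult.assoc)
  finally show ?thesis .
qed

lemma wpow:
  fixes c a t X \<theta> p :: real
  assumes c: "c > 0" and a: "a > 0" and t: "t > 0" and X: "X \<ge> 0"
  shows "(X powr \<theta> / t^2) powr p = c powr (\<theta>*p) * a powr (2*p) * ((X/c) powr (\<theta>*p) * (a*t) powr (-(2*p)))"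
proof -
  have t2: "(t^2) powr p = t powr (2*p)"
  proof -
    have "t^2 = t powr 2" using t by (simp add: powr_realpow)
    then show ?thesis by (simp add: powr_powr)
  qed
  have "(X powr \<theta> / t^2) powr p = (X powr \<theta>) powr p / (t^2) powr p"
    using X t by (simp add: powr_divide)
  also have "\<dots> = X powr (\<theta>*p) / t powr (2*p)" by (simp add: t2 powr_powr)
  finally have L: "(X powr \<theta> / t^2) powr p = X powr (\<theta>*p) / t powr (2*p)" .
  have "(X/c) powr (\<theta>*p) = X powr (\<theta>*p) / c powr (\<theta>*p)" using X c by (simp add: powr_divide)
  moreover have "(a*t) powr (-(2*p)) = 1 / (a powr (2*p) * t powr (2*p))"
    using a t by (simp add: powr_minus powr_mult divide_inverse)
  moreover have "c powr (\<theta>*p) > 0" "a powr (2*p) > 0" "t powr (2*p) > 0" using c a t by auto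
  moreover have "\<And>C A T Y::real. C > 0 \<Longrightarrow> A > 0 \<Longrightarrow> T > 0 \<Longrightarrow> C * A * ((Y/C) * (1/(A*T))) = Y/T"
    by (simp add: field_simps)
  ultimately show ?thesis unfolding L by simp
qed

theorem theorem7:
  fixes I :: "real set" and f :: "real \<Rightarrow> real"
    and m \<alpha> q p \<theta> a b :: real
  assumes "is_interval I" and "I \<subseteq> {0<..}"
    and "\<forall>x\<in>interior I. f differentiable (at x)"
    and "0 < m" "m \<le> 1" "0 \<le> \<alpha>" "\<alpha> \<le> 1" "q > 1" "1 / p + 1 / q = 1" "\<theta> > 0"
    and "a < b" "a \<in> interior I" "b / m \<in> interior I"
    and "(deriv f) absolutely_integrable_on {a..b}"
    and "harm_alpha_m_convex \<alpha> m (\<lambda>x. \<bar>deriv f x\<bar> powr q) {a..b / m}"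
  shows "\<bar>I_f f \<theta> a b\<bar> \<le> a * (b - a) / (2 * b) * (1 / (\<theta> * p + 1)) powr (1 / p)
           * ((\<bar>deriv f a\<bar> powr q + m * \<alpha> * \<bar>deriv f (b / m)\<bar> powr q) / (\<alpha> + 1)) powr (1 / q)
           * (hyp2F1 (2 * p) (\<theta> * p + 1) (\<theta> * p + 2) (1 - a / b) powr (1 / p)
              + hyp2F1 (2 * p) 1 (\<theta> * p + 2) (1 - a / b) powr (1 / p))"
proof -
  have a0: "a > 0" using assms(2) assms(12) interior_subset by auto
  have b0: "b > 0" using a0 \<open>a<b\<close> by simp
  have th: "\<theta> > 0" using assms by simp
  define lo where "lo = 1/b"
  define hi where "hi = 1/a"
  define c where "c = hi - lo"
  have lohi: "0 < lo" "lo < hi" using a0 b0 \<open>a<b\<close> by (auto simp: lo_def hi_def divide_strict_left_mono)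
  have c0: "c > 0" using lohi c_def by simp
  have bm: "b \<le> b/m" using b0 assms(4,5) by (simp add: field_simps)
  have intI: "{a..b/m} \<subseteq> interior I"
  proof
    fix x assume x: "x \<in> {a..b/m}"
    have "is_interval (interior I)" using assms(1) by (simp add: is_interval_convex_1 convex_interior)
    then have ii: "\<And>u v y. u \<in> interior I \<Longrightarrow> v \<in> interior I \<Longrightarrow> u \<le> y \<Longrightarrow> y \<le> v \<Longrightarrow> y \<in> interior I"
      unfolding is_interval_1 by blast
    show "x \<in> interior I" using x by (intro ii[OF assms(12) assms(13)]) auto
  qed
  have df: "(f has_real_derivative deriv f x) (at x)" if "x \<in> {a..b/m}" for x
    using assms(3) intI that by (auto simp: DERIV_deriv_iff_real_differentiable)
  have inv_in: "1/t \<in> {a..b}" if "t \<in> {lo..hi}" for t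
  proof -
    have t: "1/b \<le> t" "t \<le> 1/a" using that by (auto simp: lo_def hi_def)
    have tp: "t > 0" using t b0 by (smt (verit) divide_pos_pos)
    have "1/t \<le> b" using t(1) tp b0 by (simp add: field_simps)
    moreover have "a \<le> 1/t" using t(2) tp a0 by (simp add: field_simps)
    ultimately show ?thesis by simp
  qed
  have tpos: "t > 0" if "t \<in> {lo..hi}" for t using that lohi by auto
  define Q where "Q = (\<lambda>t. 1/t^2 * deriv f (1/t))"
  define P where "P = (\<lambda>t. f (1/t))"
  have dP: "(P has_real_derivative - Q t) (at t)" if "t \<in> {lo..hi}" for t
  proof -
    have "1/t \<in> {a..b/m}" using inv_in[OF that] bm by auto
    note d1 = df[OF this]
    have d2: "((\<lambda>t. 1/t) has_real_derivative - (1/t^2)) (at t)"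
      using tpos[OF that] by (auto intro!: derivative_eq_intros simp: field_simps power2_eq_square)
    from DERIV_chain2[OF d1 d2] show ?thesis by (simp add: P_def Q_def)
  qed
  have cP: "continuous_on {lo..hi} P"
  proof (intro continuous_at_imp_continuous_on ballI)
    fix t assume "t \<in> {lo..hi}"
    from DERIV_isCont[OF dP[OF this]] show "isCont P t" .
  qed
  have img: "(\<lambda>t. 1/t) ` {lo..hi} = {a..b}"
  proof
    show "(\<lambda>t. 1/t) ` {lo..hi} \<subseteq> {a..b}" using inv_in by auto
    show "{a..b} \<subseteq> (\<lambda>t. 1/t) ` {lo..hi}"
    proof
      fix x assume x: "x \<in> {a..b}"
      then have "1/x \<in> {lo..hi}" using a0 by (auto simp: lo_def hi_def field_simps)
      then show "x \<in> (\<lambda>t. 1/t) ` {lo..hi}" by (rule rev_image_eqI) simp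
    qed
  qed
  have iQ: "Q absolutely_integrable_on {lo..hi}"
  proof -
    have "(\<lambda>x. \<bar>- (1/x^2)\<bar> * deriv f (1/x)) absolutely_integrable_on {lo..hi} \<and>
           integral {lo..hi} (\<lambda>x. \<bar>- (1/x^2)\<bar> * deriv f (1/x)) = integral {a..b} (deriv f)
     \<longleftrightarrow> deriv f absolutely_integrable_on ((\<lambda>t. 1/t) ` {lo..hi}) \<and> integral ((\<lambda>t. 1/t) ` {lo..hi}) (deriv f) = integral {a..b} (deriv f)"
    proof (rule has_absolute_integral_change_of_variables_1')
      show "{lo..hi} \<in> sets lebesgue" by simp
      show "inj_on (\<lambda>t. 1/t) {lo..hi}" by (auto simp: inj_on_def)
      fix x assume "x \<in> {lo..hi}"
      then show "((\<lambda>t. 1/t) has_real_derivative - (1/x^2)) (at x within {lo..hi})"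
        using tpos by (auto intro!: derivative_eq_intros simp: field_simps power2_eq_square)
    qed
    then have "(\<lambda>x. \<bar>- (1/x^2)\<bar> * deriv f (1/x)) absolutely_integrable_on {lo..hi}"
      using img assms(14) by simp
    moreover have "(\<lambda>x. \<bar>- (1/x^2)\<bar> * deriv f (1/x)) = Q" by (auto simp: Q_def)
    ultimately show ?thesis by simp
  qed
  have iQ': "(\<lambda>t. - Q t) absolutely_integrable_on {lo..hi}"
    using absint_cont_mult[of lo hi "\<lambda>t. -1" Q] iQ by (simp add: continuous_on_const)
  define J1 where "J1 = integral {lo..hi} (\<lambda>t. (t - lo) powr \<theta> * Q t)"
  define J2 where "J2 = integral {lo..hi} (\<lambda>t. (hi - t) powr \<theta> * Q t)"
  have L: "((\<lambda>t. \<theta> * (t - lo) powr (\<theta> - 1) * P t) has_integral (c powr \<theta> * f a + J1)) {lo..hi}"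
    using ibp_left[OF lohi(2) th cP dP iQ'] by (simp add: c_def J1_def P_def hi_def)
  have R: "((\<lambda>t. \<theta> * (hi - t) powr (\<theta> - 1) * P t) has_integral (c powr \<theta> * f b - J2)) {lo..hi}"
    using ibp_right[OF lohi(2) th cP dP iQ'] by (simp add: c_def J2_def P_def lo_def)
  have G1: "Gamma (\<theta>+1) = \<theta> * Gamma \<theta>"
    using th nonpos_Ints_nonpos[of \<theta>] by (intro Gamma_plus1) auto
  have Gp: "Gamma \<theta> > 0" using th by simp
  have RLr: "RL_right (1/a) \<theta> (f \<circ> (\<lambda>x. 1/x)) (1/b) = (c powr \<theta> * f a + J1) / (\<theta> * Gamma \<theta>)"
  proof -
    have "((\<lambda>t. (t - lo) powr (\<theta> - 1) * P t) has_integral (c powr \<theta> * f a + J1) / \<theta>) {lo..hi}"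
      using has_integral_mult_right[OF L, of "1/\<theta>"] th by simp
    then have "integral {lo..hi} (\<lambda>t. (t - lo) powr (\<theta> - 1) * P t) = (c powr \<theta> * f a + J1) / \<theta>"
      by (rule integral_unique)
    then show ?thesis unfolding RL_right_def by (simp add: lo_def hi_def P_def o_def)
  qed
  have RLl: "RL_left (1/b) \<theta> (f \<circ> (\<lambda>x. 1/x)) (1/a) = (c powr \<theta> * f b - J2) / (\<theta> * Gamma \<theta>)"
  proof -
    have "((\<lambda>t. (hi - t) powr (\<theta> - 1) * P t) has_integral (c powr \<theta> * f b - J2) / \<theta>) {lo..hi}"
      using has_integral_mult_right[OF R, of "1/\<theta>"] th by simp
    then have "integral {lo..hi} (\<lambda>t. (hi - t) powr (\<theta> - 1) * P t) = (c powr \<theta> * f b - J2) / \<theta>"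
      by (rule integral_unique)
    then show ?thesis unfolding RL_left_def by (simp add: lo_def hi_def P_def o_def)
  qed
  have ab: "a*b/(b-a) = 1/c" using a0 b0 \<open>a<b\<close> by (simp add: c_def lo_def hi_def field_simps)
  have cc: "(1/c) powr \<theta> * c powr \<theta> = 1" using c0 by (simp add: powr_divide)
  have If: "I_f f \<theta> a b = (1/c) powr \<theta> * (J2 - J1) / 2"
  proof -
    have "I_f f \<theta> a b = (f a + f b) / 2 - \<theta> * Gamma \<theta> / 2 * (1/c) powr \<theta>
        * ((c powr \<theta> * f a + J1) / (\<theta> * Gamma \<theta>) + (c powr \<theta> * f b - J2) / (\<theta> * Gamma \<theta>))"
      unfolding I_f_def RLr RLl G1 ab ..
    also have "\<dots> = (f a + f b) / 2 - ((1/c) powr \<theta> * c powr \<theta>) * (f a + f b) / 2 - (1/c) powr \<theta> * (J1 - J2) / 2"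
    proof -
      have gen: "\<And>X Y K A C J1 J2 :: real. K > 0 \<Longrightarrow> (X + Y) / 2 - K / 2 * A * ((C * X + J1) / K + (C * Y - J2) / K)
          = (X + Y) / 2 - (A * C) * (X + Y) / 2 - A * (J1 - J2) / 2"
        by (simp add: field_simps)
      show ?thesis by (rule gen) (use th Gp in simp)
    qed
    finally show ?thesis unfolding cc by (simp add: field_simps)
  qed
  have p0: "p > 0" and p1: "p > 1"
  proof -
    have q: "1/q > 0" "1/q < 1" using assms(8) by auto
    then have "1/p > 0" "1/p < 1" using assms(9) by linarith+
    then show "p > 0" "p > 1" by (simp_all add: zero_less_divide_1_iff)
  qed
  have q1: "q > 1" using assms by simp
  have pq: "1/p + 1/q = 1" using assms by simp
  have r0: "\<theta>*p > 0" using th p0 by simp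
  have s0: "2*p > 0" using p0 by simp
  define z where "z = 1 - a/b"
  have z: "0 \<le> z" "z < 1" using a0 b0 \<open>a<b\<close> by (auto simp: z_def)
  have ac: "a*c = z" using a0 b0 by (simp add: z_def c_def hi_def lo_def field_simps)
  have ahi: "a * hi = 1" using a0 by (simp add: hi_def)
  define H1 where "H1 = hyp2F1 (2*p) (\<theta>*p+1) (\<theta>*p+2) z"
  define H2 where "H2 = hyp2F1 (2*p) 1 (\<theta>*p+2) z"
  have hI1: "((\<lambda>u. u powr (\<theta>*p) * (1 - z*u) powr (-(2*p))) has_integral H1 / (\<theta>*p+1)) {0..1}"
    and H1p: "H1 > 0" using hyp_int1[OF z r0 s0] by (simp_all add: H1_def)
  have hI2: "((\<lambda>u. (1 - u) powr (\<theta>*p) * (1 - z*u) powr (-(2*p))) has_integral H2 / (\<theta>*p+1)) {0..1}"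
    and H2p: "H2 > 0" using hyp_int2[OF z r0 s0] by (simp_all add: H2_def)
  define K1 where "K1 = \<bar>deriv f a\<bar> powr q"
  define K2 where "K2 = \<bar>deriv f (b / m)\<bar> powr q"
  define CG where "CG = (K1 + m * \<alpha> * K2) / (\<alpha> + 1)"
  have K: "K1 \<ge> 0" "K2 \<ge> 0" by (auto simp: K1_def K2_def)
  define Gu where "Gu = (\<lambda>u. rpow (1 - u) \<alpha> * K1 + m * (1 - rpow (1 - u) \<alpha>) * K2)"
  have iGu: "(Gu has_integral CG) {0..1}"
  proof -
    have r: "((\<lambda>u. rpow (1 - u) \<alpha>) has_integral 1 / (\<alpha> + 1)) {0..1}" using rpow_int assms(6) by simp
    have one: "((\<lambda>u. 1) has_integral 1) {0..1::real}" using has_integral_const_real[of 1 0 1] by simp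
    have "(Gu has_integral (1 / (\<alpha> + 1)) * K1 + m * (1 - 1 / (\<alpha> + 1)) * K2) {0..1}"
      unfolding Gu_def
      by (intro has_integral_add has_integral_mult_left has_integral_mult_right has_integral_diff r one)
    moreover have "(1 / (\<alpha> + 1)) * K1 + m * (1 - 1 / (\<alpha> + 1)) * K2 = CG"
    proof -
      have ne: "\<alpha> + 1 \<noteq> 0" using assms(6) by simp
      have "1 - 1 / (\<alpha> + 1) = \<alpha> / (\<alpha> + 1)" using ne by (simp add: field_simps)
      then have "(1 / (\<alpha> + 1)) * K1 + m * (1 - 1 / (\<alpha> + 1)) * K2 = K1 / (\<alpha> + 1) + (m * \<alpha> * K2) / (\<alpha> + 1)"
        by simp
      also have "\<dots> = CG" unfolding CG_def by (simp add: add_divide_distrib)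
      finally show ?thesis .
    qed
    ultimately show ?thesis by simp
  qed
  define h where "h = (\<lambda>t. \<bar>deriv f (1/t)\<bar>)"
  define wA where "wA = (\<lambda>t. (hi - t) powr \<theta> / t^2)"
  define wB where "wB = (\<lambda>t. (t - lo) powr \<theta> / t^2)"
  define G where "G = (\<lambda>t. Gu ((hi - t) / c))"
  have iG: "(G has_integral c * CG) {lo..hi}"
    using aff_refl[OF lohi(2) iGu] by (simp add: G_def c_def)
  have zt: "1 - z * ((hi - t) / c) = a * t" for t
    using c0 ahi by (simp add: ac[symmetric] field_simps)
  have iwA: "((\<lambda>t. wA t powr p) has_integral c * (c powr (\<theta>*p) * a powr (2*p) * (H1 / (\<theta>*p+1)))) {lo..hi}"
  proof -
    have "((\<lambda>u. c powr (\<theta>*p) * a powr (2*p) * (u powr (\<theta>*p) * (1 - z*u) powr (-(2*p))))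
         has_integral c powr (\<theta>*p) * a powr (2*p) * (H1 / (\<theta>*p+1))) {0..1}"
      by (intro has_integral_mult_right hI1)
    note X = aff_refl[OF lohi(2) this, unfolded c_def[symmetric] zt]
    have "((\<lambda>t. c powr (\<theta>*p) * a powr (2*p) * (((hi - t) / c) powr (\<theta>*p) * (a * t) powr (-(2*p))))
         has_integral c * (c powr (\<theta>*p) * a powr (2*p) * (H1 / (\<theta>*p+1)))) {lo..hi}"
      by (rule X)
    then show ?thesis
    proof (rule has_integral_eq[rotated])
      fix t assume t: "t \<in> {lo..hi}"
      show "c powr (\<theta>*p) * a powr (2*p) * (((hi - t) / c) powr (\<theta>*p) * (a * t) powr (-(2*p))) = wA t powr p"
        unfolding wA_def using wpow[OF c0 a0 tpos[OF t], of "hi - t" \<theta> p] t by simp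
    qed
  qed
  have iwB: "((\<lambda>t. wB t powr p) has_integral c * (c powr (\<theta>*p) * a powr (2*p) * (H2 / (\<theta>*p+1)))) {lo..hi}"
  proof -
    have "((\<lambda>u. c powr (\<theta>*p) * a powr (2*p) * ((1 - u) powr (\<theta>*p) * (1 - z*u) powr (-(2*p))))
         has_integral c powr (\<theta>*p) * a powr (2*p) * (H2 / (\<theta>*p+1))) {0..1}"
      by (intro has_integral_mult_right hI2)
    note X = aff_refl[OF lohi(2) this, unfolded c_def[symmetric] zt]
    have "((\<lambda>t. c powr (\<theta>*p) * a powr (2*p) * ((1 - (hi - t) / c) powr (\<theta>*p) * (a * t) powr (-(2*p))))
         has_integral c * (c powr (\<theta>*p) * a powr (2*p) * (H2 / (\<theta>*p+1)))) {lo..hi}"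
      by (rule X)
    then show ?thesis
    proof (rule has_integral_eq[rotated])
      fix t assume t: "t \<in> {lo..hi}"
      have e: "1 - (hi - t) / c = (t - lo) / c" using c0 by (simp add: c_def field_simps)
      show "c powr (\<theta>*p) * a powr (2*p) * ((1 - (hi - t) / c) powr (\<theta>*p) * (a * t) powr (-(2*p))) = wB t powr p"
        unfolding wB_def e using wpow[OF c0 a0 tpos[OF t], of "t - lo" \<theta> p] t by simp
    qed
  qed
  have cab: "c * (a*b) = b - a" using a0 b0 by (simp add: c_def hi_def lo_def field_simps)
  have conv: "h t powr q \<le> G t" if t: "t \<in> {lo..hi}" for t
  proof -
    define \<tau> where "\<tau> = 1 - (hi - t)/c"
    have \<tau>c: "\<tau> * c = t - lo" using c0 by (simp add: \<tau>_def c_def field_simps)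
    have \<tau>01: "\<tau> \<in> {0..1}"
    proof -
      have "0 \<le> (hi - t)/c" "(hi - t)/c \<le> 1" using t c0 by (auto simp: c_def field_simps)
      then show ?thesis by (simp add: \<tau>_def)
    qed
    have "\<tau> * (b - a) = (t - lo) * (a*b)" using \<tau>c cab by (metis mult.assoc)
    also have "\<dots> = a*b*t - a" using b0 by (simp add: lo_def field_simps)
    finally have e1: "\<tau> * (b - a) = a*b*t - a" .
    have e2: "m * \<tau> * (b/m) = \<tau> * b" using assms(4) by simp
    have "m * \<tau> * (b/m) + (1 - \<tau>) * a = a + \<tau> * (b - a)" unfolding e2 by (simp add: algebra_simps)
    then have den: "m * \<tau> * (b/m) + (1 - \<tau>) * a = a*b*t" unfolding e1 by simp
    have arg: "m * a * (b/m) / (m * \<tau> * (b/m) + (1 - \<tau>) * a) = 1/t"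
      unfolding den using assms(4) a0 b0 tpos[OF t] by simp
    have ina: "a \<in> {a..b/m}" and inb: "b/m \<in> {a..b/m}" using bm \<open>a<b\<close> by auto
    have in1: "1/t \<in> {a..b/m}" using inv_in[OF t] bm by auto
    have "\<bar>deriv f (m * a * (b/m) / (m * \<tau> * (b/m) + (1 - \<tau>) * a))\<bar> powr q
        \<le> rpow \<tau> \<alpha> * \<bar>deriv f a\<bar> powr q + m * (1 - rpow \<tau> \<alpha>) * \<bar>deriv f (b/m)\<bar> powr q"
      by (rule assms(15)[unfolded harm_alpha_m_convex_def, rule_format, OF ina inb \<tau>01]) (unfold arg, rule in1)
    then have "\<bar>deriv f (1/t)\<bar> powr q
        \<le> rpow \<tau> \<alpha> * \<bar>deriv f a\<bar> powr q + m * (1 - rpow \<tau> \<alpha>) * \<bar>deriv f (b/m)\<bar> powr q"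
      by (simp only: arg)
    then show ?thesis unfolding h_def G_def Gu_def K1_def K2_def \<tau>_def by simp
  qed
  have iaQ: "(\<lambda>t. \<bar>Q t\<bar>) absolutely_integrable_on {lo..hi}"
    using absolutely_integrable_norm[OF iQ] by (simp add: o_def)
  have cA: "continuous_on {lo..hi} (\<lambda>t. (hi - t) powr \<theta>)"
    using th by (intro continuous_on_powr') (auto intro!: continuous_intros)
  have cB: "continuous_on {lo..hi} (\<lambda>t. (t - lo) powr \<theta>)"
    using th by (intro continuous_on_powr') (auto intro!: continuous_intros)
  have eA: "wA t * h t = (hi - t) powr \<theta> * \<bar>Q t\<bar>" if "t \<in> {lo..hi}" for t
    unfolding wA_def h_def Q_def abs_mult by simp
  have eB: "wB t * h t = (t - lo) powr \<theta> * \<bar>Q t\<bar>" if "t \<in> {lo..hi}" for t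
    unfolding wB_def h_def Q_def abs_mult by simp
  have iA: "(\<lambda>t. wA t * h t) integrable_on {lo..hi}"
  proof -
    have "(\<lambda>t. (hi - t) powr \<theta> * \<bar>Q t\<bar>) integrable_on {lo..hi}"
      using absint_cont_mult[OF cA iaQ] by (simp add: absolutely_integrable_on_def)
    then show ?thesis by (rule integrable_eq) (rule eA[symmetric])
  qed
  have iB: "(\<lambda>t. wB t * h t) integrable_on {lo..hi}"
  proof -
    have "(\<lambda>t. (t - lo) powr \<theta> * \<bar>Q t\<bar>) integrable_on {lo..hi}"
      using absint_cont_mult[OF cB iaQ] by (simp add: absolutely_integrable_on_def)
    then show ?thesis by (rule integrable_eq) (rule eB[symmetric])
  qed
  have iJ1: "(\<lambda>t. (t - lo) powr \<theta> * Q t) integrable_on {lo..hi}"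
    using absint_cont_mult[OF cB iQ] by (simp add: absolutely_integrable_on_def)
  have iJ2: "(\<lambda>t. (hi - t) powr \<theta> * Q t) integrable_on {lo..hi}"
    using absint_cont_mult[OF cA iQ] by (simp add: absolutely_integrable_on_def)
  have bound: "\<bar>J2 - J1\<bar> \<le> integral {lo..hi} (\<lambda>t. wA t * h t) + integral {lo..hi} (\<lambda>t. wB t * h t)"
  proof -
    have "J2 - J1 = integral {lo..hi} (\<lambda>t. (hi - t) powr \<theta> * Q t - (t - lo) powr \<theta> * Q t)"
      unfolding J1_def J2_def by (rule integral_diff[OF iJ2 iJ1, symmetric])
    also have "norm \<dots> \<le> integral {lo..hi} (\<lambda>t. wA t * h t + wB t * h t)"
    proof (rule integral_norm_bound_integral)
      show "(\<lambda>t. (hi - t) powr \<theta> * Q t - (t - lo) powr \<theta> * Q t) integrable_on {lo..hi}"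
        by (intro integrable_diff iJ1 iJ2)
      show "(\<lambda>t. wA t * h t + wB t * h t) integrable_on {lo..hi}" by (intro integrable_add iA iB)
      fix t assume t: "t \<in> {lo..hi}"
      have "\<bar>(hi - t) powr \<theta> * Q t - (t - lo) powr \<theta> * Q t\<bar> \<le> (hi - t) powr \<theta> * \<bar>Q t\<bar> + (t - lo) powr \<theta> * \<bar>Q t\<bar>"
      proof -
        have "\<bar>(hi - t) powr \<theta> * Q t - (t - lo) powr \<theta> * Q t\<bar> \<le> \<bar>(hi - t) powr \<theta> * Q t\<bar> + \<bar>(t - lo) powr \<theta> * Q t\<bar>"
          by (rule abs_triangle_ineq4)
        then show ?thesis by (simp add: abs_mult)
      qed
      then show "norm ((hi - t) powr \<theta> * Q t - (t - lo) powr \<theta> * Q t) \<le> wA t * h t + wB t * h t"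
        using eA[OF t] eB[OF t] by simp
    qed
    also have "\<dots> = integral {lo..hi} (\<lambda>t. wA t * h t) + integral {lo..hi} (\<lambda>t. wB t * h t)"
      by (rule integral_add[OF iA iB])
    finally show ?thesis by simp
  qed
  have CG0: "CG \<ge> 0" using K assms(4,6) by (simp add: CG_def)
  define WA where "WA = c * (c powr (\<theta>*p) * a powr (2*p) * (H1 / (\<theta>*p+1)))"
  define WB where "WB = c * (c powr (\<theta>*p) * a powr (2*p) * (H2 / (\<theta>*p+1)))"
  have WA0: "WA > 0" using c0 a0 H1p r0 by (simp add: WA_def)
  have WB0: "WB > 0" using c0 a0 H2p r0 by (simp add: WB_def)
  have wnn: "\<forall>t\<in>{lo..hi}. 0 \<le> wA t \<and> 0 \<le> h t \<and> h t powr q \<le> G t"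
    using conv by (simp add: wA_def h_def)
  have wnnB: "\<forall>t\<in>{lo..hi}. 0 \<le> wB t \<and> 0 \<le> h t \<and> h t powr q \<le> G t"
    using conv by (simp add: wB_def h_def)
  have h0: "h t = 0" if "CG = 0" "t \<in> {lo..hi}" for t
  proof -
    have "K1 + m * \<alpha> * K2 = 0" using that(1) assms(6) by (simp add: CG_def)
    moreover have "m * \<alpha> * K2 \<ge> 0" using K assms(4,6) by simp
    ultimately have k1: "K1 = 0" and k2: "m * \<alpha> * K2 = 0" using K by linarith+
    have "G t = 0"
    proof (cases "\<alpha> = 0")
      case True
      have "rpow x 0 = 1" for x by (simp add: rpow_def)
      then show ?thesis unfolding G_def Gu_def k1 True by simp
    next
      case False
      then have "K2 = 0" using k2 assms(4) by simp
      then show ?thesis unfolding G_def Gu_def k1 by simp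
    qed
    then have "h t powr q \<le> 0" using conv[OF that(2)] by simp
    moreover have "h t powr q \<ge> 0" by simp
    ultimately have "h t powr q = 0" by linarith
    then show ?thesis by (simp only: powr_eq_0_iff)
  qed
  have YA: "integral {lo..hi} (\<lambda>t. wA t * h t) \<le> WA powr (1/p) * (c*CG) powr (1/q)"
  proof (cases "CG = 0")
    case False
    then have "c*CG > 0" using CG0 c0 by simp
    from young_int[OF p1 q1 pq iwA[folded WA_def] iG WA0 this iA wnn] show ?thesis .
  next
    case True
    have "integral {lo..hi} (\<lambda>t. wA t * h t) = integral {lo..hi} (\<lambda>t. 0)"
      by (rule integral_cong) (simp add: h0[OF True])
    then show ?thesis by simp
  qed
  have YB: "integral {lo..hi} (\<lambda>t. wB t * h t) \<le> WB powr (1/p) * (c*CG) powr (1/q)"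
  proof (cases "CG = 0")
    case False
    then have "c*CG > 0" using CG0 c0 by simp
    from young_int[OF p1 q1 pq iwB[folded WB_def] iG WB0 this iB wnnB] show ?thesis .
  next
    case True
    have "integral {lo..hi} (\<lambda>t. wB t * h t) = integral {lo..hi} (\<lambda>t. 0)"
      by (rule integral_cong) (simp add: h0[OF True])
    then show ?thesis by simp
  qed
  have Xp: "(1/c) powr \<theta> \<ge> 0" by simp
  have "\<bar>I_f f \<theta> a b\<bar> = (1/c) powr \<theta> * \<bar>J2 - J1\<bar> / 2" unfolding If abs_divide abs_mult using Xp by simp
  also have "\<dots> \<le> (1/c) powr \<theta> * (WA powr (1/p) * (c*CG) powr (1/q) + WB powr (1/p) * (c*CG) powr (1/q)) / 2"
    using bound YA YB Xp by (intro divide_right_mono mult_left_mono) auto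
  also have "WA powr (1/p) = c powr (1/p) * c powr \<theta> * a^2 * (1 / (\<theta>*p+1)) powr (1/p) * H1 powr (1/p)"
    unfolding WA_def using final_alg[OF c0 a0 p0 _ , of H1 \<theta>] H1p r0 by simp
  also have "WB powr (1/p) = c powr (1/p) * c powr \<theta> * a^2 * (1 / (\<theta>*p+1)) powr (1/p) * H2 powr (1/p)"
    unfolding WB_def using final_alg[OF c0 a0 p0 _ , of H2 \<theta>] H2p r0 by simp
  also have "(c*CG) powr (1/q) = c powr (1/q) * CG powr (1/q)" using c0 CG0 by (simp add: powr_mult)
  also have "(1/c) powr \<theta> * (c powr (1/p) * c powr \<theta> * a^2 * (1 / (\<theta>*p+1)) powr (1/p) * H1 powr (1/p) * (c powr (1/q) * CG powr (1/q))
        + c powr (1/p) * c powr \<theta> * a^2 * (1 / (\<theta>*p+1)) powr (1/p) * H2 powr (1/p) * (c powr (1/q) * CG powr (1/q))) / 2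
      = (c * a^2 / 2) * (1 / (\<theta>*p+1)) powr (1/p) * CG powr (1/q) * (H1 powr (1/p) + H2 powr (1/p))"
  proof -
    have gen: "\<And>X Y U V cc A E R1 R2 C :: real. X*Y = 1 \<Longrightarrow> U*V = cc \<Longrightarrow>
        X * ((U*Y*A*E*R1)*(V*C) + (U*Y*A*E*R2)*(V*C)) / 2 = (cc*A/2)*E*C*(R1+R2)"
    proof -
      fix X Y U V cc A E R1 R2 C :: real
      assume xy: "X*Y = 1" and uv: "U*V = cc"
      have "X * ((U*Y*A*E*R1)*(V*C) + (U*Y*A*E*R2)*(V*C)) / 2 = (X*Y)*(U*V)*A*E*C*(R1+R2)/2"
        by (simp add: algebra_simps)
      then show "X * ((U*Y*A*E*R1)*(V*C) + (U*Y*A*E*R2)*(V*C)) / 2 = (cc*A/2)*E*C*(R1+R2)"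
        unfolding xy uv by simp
    qed
    have cpq: "c powr (1/p) * c powr (1/q) = c" using c0 pq by (simp add: powr_add[symmetric])
    show ?thesis by (rule gen[OF cc cpq])
  qed
  also have "c * a^2 / 2 = a * (b - a) / (2 * b)"
  proof -
    have "c * a^2 / 2 = a * (a*c) / 2" by (simp add: power2_eq_square)
    also have "\<dots> = a * (b - a) / (2 * b)" unfolding ac z_def using b0 by (simp add: field_simps)
    finally show ?thesis .
  qed
  finally show ?thesis by (simp add: CG_def K1_def K2_def H1_def H2_def z_def)
qed

end
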